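(* Let $\phi$ be the density of the $k$-dimensional standard normal distribution. For all vectors $u,v\in\mathbb{R}^k$, $$\int_{\mathbb{R}^k}\Big|\sum_{j,j',j''=1}^k u_jv_{j'}v_{j''}\,\partial_{jj'j''}\phi(z)\Big|\,dz\le 2\Big(1+\sqrt{\tfrac{2}{\pi}}\Big)|u||v|^2.$$
   Context: $|\cdot|$ is the Euclidean norm; $\partial_{jj'j''}$ denotes the third partial derivative with respect to coordinates $j,j',j''$. *)

theory Defs
  imports "HOL-Analysis.Analysis"
begin

definition std_normal_density :: "(real ^ 'k) \<Rightarrow> real" where
  "std_normal_density z = (2 * pi) powr (- real CARD('k) / 2) * exp (- (norm z)\<^sup>2 / 2)"

definition partial_deriv :: "'k \<Rightarrow> ((real ^ 'k) \<Rightarrow> real) \<Rightarrow> (real ^ 'k) \<Rightarrow> real" where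
  "partial_deriv j f z = deriv (\<lambda>t. f (z + t *\<^sub>R axis j 1)) 0"

end

theory Submission imports Defs "HOL-Probability.Probability" begin
hide_const (open) Distributions.std_normal_density

abbreviation "g1 \<equiv> normal_density 0 1"

lemma mom0: "has_bochner_integral lborel (\<lambda>y. g1 y) 1"
  using std_normal_moment_even[of 0] by simp
lemma mom1: "has_bochner_integral lborel (\<lambda>y. g1 y * y) 0"
  using std_normal_moment_odd[of 0] by simp
lemma mom2: "has_bochner_integral lborel (\<lambda>y. g1 y * y^2) 1"
  using std_normal_moment_even[of 1] by simp
lemma mom3: "has_bochner_integral lborel (\<lambda>y. g1 y * y^3) 0"
  using std_normal_moment_odd[of 1] by (simp add: numeral_eq_Suc)
lemma mom4: "has_bochner_integral lborel (\<lambda>y. g1 y * y^4) 3"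
  using std_normal_moment_even[of 2] by (simp add: fact_numeral)

lemma inner0: "(\<integral>\<^sup>+y. ennreal (g1 y * w * (c + a*y)^0) \<partial>lborel) = ennreal w"
  if "w \<ge> 0" for w c a :: real
proof -
  have "has_bochner_integral lborel (\<lambda>y. w * g1 y) (w * 1)"
    by (intro has_bochner_integral_mult_right mom0)
  then show ?thesis using that
    by (subst nn_integral_eq_integral) (auto simp: has_bochner_integral_iff mult.commute)
qed

lemma inner2: "(\<integral>\<^sup>+y. ennreal (g1 y * w * (c + a*y)^2) \<partial>lborel) = ennreal (w * c^2 + w * a^2)"
  if "w \<ge> 0" for w c a :: real
proof -
  have e: "(\<lambda>y. g1 y * w * (c + a*y)^2) = (\<lambda>y. (w*c^2) * g1 y + (2*w*c*a) * (g1 y * y) + (w*a^2) * (g1 y * y^2))"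
    by (rule ext) (simp add: power2_eq_square algebra_simps)
  have "has_bochner_integral lborel (\<lambda>y. (w*c^2) * g1 y + (2*w*c*a) * (g1 y * y) + (w*a^2) * (g1 y * y^2))
     ((w*c^2) * 1 + (2*w*c*a) * 0 + (w*a^2) * 1)"
    by (intro has_bochner_integral_add has_bochner_integral_mult_right mom0 mom1 mom2)
  then have "has_bochner_integral lborel (\<lambda>y. g1 y * w * (c + a*y)^2) (w * c^2 + w * a^2)"
    unfolding e by simp
  then show ?thesis using that
    by (subst nn_integral_eq_integral) (auto simp: has_bochner_integral_iff)
qed

lemma inner4: "(\<integral>\<^sup>+y. ennreal (g1 y * w * (c + a*y)^4) \<partial>lborel) = ennreal (w * c^4 + 6 * a^2 * (w * c^2) + 3 * a^4 * w)"
  if "w \<ge> 0" for w c a :: real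
proof -
  have e: "(\<lambda>y. g1 y * w * (c + a*y)^4) = (\<lambda>y. (w*c^4) * g1 y + (4*w*c^3*a) * (g1 y * y) + (6*w*c^2*a^2) * (g1 y * y^2)
     + (4*w*c*a^3) * (g1 y * y^3) + (w*a^4) * (g1 y * y^4))"
    by (rule ext) (simp add: power2_eq_square power3_eq_cube power4_eq_xxxx algebra_simps)
  have "has_bochner_integral lborel (\<lambda>y. (w*c^4) * g1 y + (4*w*c^3*a) * (g1 y * y) + (6*w*c^2*a^2) * (g1 y * y^2)
     + (4*w*c*a^3) * (g1 y * y^3) + (w*a^4) * (g1 y * y^4))
     ((w*c^4) * 1 + (4*w*c^3*a) * 0 + (6*w*c^2*a^2) * 1 + (4*w*c*a^3) * 0 + (w*a^4) * 3)"
    by (intro has_bochner_integral_add has_bochner_integral_mult_right mom0 mom1 mom2 mom3 mom4)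
  then have "has_bochner_integral lborel (\<lambda>y. g1 y * w * (c + a*y)^4) (w * c^4 + 6 * a^2 * (w * c^2) + 3 * a^4 * w)"
    unfolding e by (simp add: algebra_simps)
  then show ?thesis using that
    by (subst nn_integral_eq_integral) (auto simp: has_bochner_integral_iff)
qed

definition WW :: "'i set \<Rightarrow> ('i \<Rightarrow> real) \<Rightarrow> real" where
  "WW I x = (\<Prod>i\<in>I. g1 (x i))"

lemma WW_nonneg: "WW I x \<ge> 0"
  unfolding WW_def by (intro prod_nonneg) auto

interpretation PSF: product_sigma_finite "\<lambda>_. lborel :: real measure"
  by standard

lemma prodmom:
  fixes a :: "'i \<Rightarrow> real"
  assumes "finite I"
  shows "(\<integral>\<^sup>+x. ennreal (WW I x * (\<Sum>i\<in>I. a i * x i)^0) \<partial>Pi\<^sub>M I (\<lambda>_. lborel)) = 1 \<and>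
         (\<integral>\<^sup>+x. ennreal (WW I x * (\<Sum>i\<in>I. a i * x i)^2) \<partial>Pi\<^sub>M I (\<lambda>_. lborel)) = ennreal (\<Sum>i\<in>I. (a i)^2) \<and>
         (\<integral>\<^sup>+x. ennreal (WW I x * (\<Sum>i\<in>I. a i * x i)^4) \<partial>Pi\<^sub>M I (\<lambda>_. lborel)) = ennreal (3 * (\<Sum>i\<in>I. (a i)^2)^2)"
  using assms
proof (induction I rule: finite_induct)
  case empty
  show ?case
    by (simp add: WW_def PiM_empty emeasure_count_space)
next
  case (insert i I)
  let ?M = "Pi\<^sub>M I (\<lambda>_. lborel :: real measure)"
  let ?s = "\<Sum>i\<in>I. (a i)^2"
  have WWi: "WW (insert i I) (x(i := y)) = g1 y * WW I x" for x y
  proof -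
    have "(\<Prod>j\<in>I. g1 ((x(i := y)) j)) = (\<Prod>j\<in>I. g1 (x j))"
      using insert(2) by (intro prod.cong) auto
    then show ?thesis using insert(1,2) by (simp add: WW_def)
  qed
  have Si: "(\<Sum>j\<in>insert i I. a j * (x(i := y)) j) = (\<Sum>j\<in>I. a j * x j) + a i * y" for x y
  proof -
    have "(\<Sum>j\<in>I. a j * (x(i := y)) j) = (\<Sum>j\<in>I. a j * x j)"
      using insert(2) by (intro sum.cong) auto
    then show ?thesis using insert(1,2) by simp
  qed
  have step: "(\<integral>\<^sup>+x. ennreal (WW (insert i I) x * (\<Sum>j\<in>insert i I. a j * x j)^n) \<partial>Pi\<^sub>M (insert i I) (\<lambda>_. lborel))
     = (\<integral>\<^sup>+x. (\<integral>\<^sup>+y. ennreal (g1 y * WW I x * ((\<Sum>j\<in>I. a j * x j) + a i * y)^n) \<partial>lborel) \<partial>?M)" for n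
  proof (subst PSF.product_nn_integral_insert)
    show "(\<lambda>x. ennreal (WW (insert i I) x * (\<Sum>j\<in>insert i I. a j * x j) ^ n)) \<in> borel_measurable (Pi\<^sub>M (insert i I) (\<lambda>_. lborel))"
      unfolding WW_def by measurable
  qed (use insert in \<open>simp_all only: WWi Si not_False_eq_True\<close>)
  let ?c = "\<lambda>x. (\<Sum>j\<in>I. a j * x j)"
  have I0: "(\<integral>\<^sup>+x. ennreal (WW I x) \<partial>?M) = 1" using insert(3) by simp
  have I2: "(\<integral>\<^sup>+x. ennreal (WW I x * ?c x ^ 2) \<partial>?M) = ennreal ?s" using insert(3) by simp
  have I4: "(\<integral>\<^sup>+x. ennreal (WW I x * ?c x ^ 4) \<partial>?M) = ennreal (3 * ?s^2)" using insert(3) by simp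
  have m[measurable]: "WW I \<in> borel_measurable ?M" unfolding WW_def by measurable
  have s0: "?s \<ge> 0" by (intro sum_nonneg) auto
  have A0: "(\<integral>\<^sup>+x. ennreal (WW (insert i I) x * (\<Sum>j\<in>insert i I. a j * x j)^0) \<partial>Pi\<^sub>M (insert i I) (\<lambda>_. lborel)) = 1"
    unfolding step
    apply (subst nn_integral_cong[where v="\<lambda>x. ennreal (WW I x)"])
     apply (rule inner0[OF WW_nonneg])
    apply (rule I0)
    done
  have A2: "(\<integral>\<^sup>+x. ennreal (WW (insert i I) x * (\<Sum>j\<in>insert i I. a j * x j)^2) \<partial>Pi\<^sub>M (insert i I) (\<lambda>_. lborel))
     = ennreal (\<Sum>j\<in>insert i I. (a j)^2)"
  proof -
    have "(\<integral>\<^sup>+x. ennreal (WW (insert i I) x * (\<Sum>j\<in>insert i I. a j * x j)^2) \<partial>Pi\<^sub>M (insert i I) (\<lambda>_. lborel))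
       = (\<integral>\<^sup>+x. ennreal (WW I x * ?c x ^ 2) + ennreal ((a i)^2) * ennreal (WW I x) \<partial>?M)"
      unfolding step
      apply (rule nn_integral_cong)
      apply (subst inner2[OF WW_nonneg])
      apply (subst ennreal_plus, simp add: WW_nonneg, simp add: WW_nonneg)
      apply (subst ennreal_mult[symmetric], simp, simp add: WW_nonneg)
      apply (simp add: mult.commute)
      done
    also have "\<dots> = ennreal ?s + ennreal ((a i)^2) * 1"
      by (subst nn_integral_add) (auto simp: nn_integral_cmult I0 I2)
    also have "\<dots> = ennreal (\<Sum>j\<in>insert i I. (a j)^2)"
      using insert(1,2) s0 by (simp add: ennreal_plus)
    finally show ?thesis .
  qed
  have A4: "(\<integral>\<^sup>+x. ennreal (WW (insert i I) x * (\<Sum>j\<in>insert i I. a j * x j)^4) \<partial>Pi\<^sub>M (insert i I) (\<lambda>_. lborel))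
     = ennreal (3 * (\<Sum>j\<in>insert i I. (a j)^2)^2)"
  proof -
    have "(\<integral>\<^sup>+x. ennreal (WW (insert i I) x * (\<Sum>j\<in>insert i I. a j * x j)^4) \<partial>Pi\<^sub>M (insert i I) (\<lambda>_. lborel))
       = (\<integral>\<^sup>+x. ennreal (WW I x * ?c x ^ 4) + (ennreal (6 * (a i)^2) * ennreal (WW I x * ?c x ^ 2)
           + ennreal (3 * (a i)^4) * ennreal (WW I x)) \<partial>?M)"
      unfolding step
      apply (rule nn_integral_cong)
      apply (subst inner4[OF WW_nonneg])
      apply (subst ennreal_plus, simp add: WW_nonneg, simp add: WW_nonneg)
      apply (subst ennreal_plus, simp add: WW_nonneg, simp add: WW_nonneg)
      apply (subst ennreal_mult[symmetric], simp, simp add: WW_nonneg)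
      apply (subst ennreal_mult[symmetric], simp, simp add: WW_nonneg)
      apply (simp add: mult.commute add.assoc)
      done
    also have "\<dots> = ennreal (3 * ?s^2) + (ennreal (6 * (a i)^2) * ennreal ?s + ennreal (3 * (a i)^4) * 1)"
      by (subst nn_integral_add; (subst nn_integral_add)?) (auto simp: nn_integral_cmult I0 I2 I4)
    also have "\<dots> = ennreal (3 * ?s^2 + (6 * (a i)^2 * ?s + 3 * (a i)^4))"
    proof -
      have "ennreal (6 * (a i)^2) * ennreal ?s = ennreal (6 * (a i)^2 * ?s)"
        using s0 by (rule ennreal_mult[symmetric, rotated]) simp
      moreover have "ennreal (6 * (a i)^2 * ?s) + ennreal (3 * (a i)^4) = ennreal (6 * (a i)^2 * ?s + 3 * (a i)^4)"
        using s0 by (intro ennreal_plus[symmetric]) auto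
      moreover have "ennreal (3 * ?s^2) + ennreal (6 * (a i)^2 * ?s + 3 * (a i)^4) = ennreal (3 * ?s^2 + (6 * (a i)^2 * ?s + 3 * (a i)^4))"
        using s0 by (intro ennreal_plus[symmetric]) auto
      ultimately show ?thesis by simp
    qed
    also have "3 * ?s^2 + (6 * (a i)^2 * ?s + 3 * (a i)^4) = 3 * (\<Sum>j\<in>insert i I. (a j)^2)^2"
      using insert(1,2) by (simp add: power2_eq_square power4_eq_xxxx algebra_simps)
    finally show ?thesis .
  qed
  show ?case using A0 A2 A4 by blast
qed

lemma transport:
  fixes F :: "'a::euclidean_space \<Rightarrow> ennreal"
  assumes [measurable]: "F \<in> borel_measurable borel"
  shows "(\<integral>\<^sup>+z. F z \<partial>lborel) = (\<integral>\<^sup>+f. F (\<Sum>b\<in>Basis. f b *\<^sub>R b) \<partial>Pi\<^sub>M Basis (\<lambda>_. lborel))"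
  by (subst lborel_eq) (simp add: nn_integral_distr)

lemma inner_transport:
  fixes f :: "'a::euclidean_space \<Rightarrow> real"
  assumes "b \<in> Basis"
  shows "(\<Sum>b'\<in>Basis. f b' *\<^sub>R b') \<bullet> b = f b"
  using assms by (simp add: inner_sum_left inner_Basis if_distrib sum.delta cong: if_cong)

lemma phi_prod:
  fixes z :: "real ^ 'k"
  shows "std_normal_density z = (\<Prod>b\<in>Basis. g1 (z \<bullet> b))"
proof -
  have n: "(norm z)^2 = (\<Sum>b\<in>Basis. (z \<bullet> b)^2)"
    by (simp only: power2_norm_eq_inner, subst euclidean_inner, simp add: power2_eq_square)
  have "(\<Prod>b\<in>Basis. g1 (z \<bullet> b)) = (\<Prod>b\<in>Basis. 1 / sqrt (2*pi) * exp (- ((z \<bullet> b)^2) / 2))"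
    by (simp add: normal_density_def)
  also have "\<dots> = (1 / sqrt (2*pi)) ^ CARD('k) * exp (- (\<Sum>b\<in>Basis. (z \<bullet> b)^2) / 2)"
  proof -
    have "(\<Prod>b\<in>Basis. 1 / sqrt (2*pi) * exp (- ((z \<bullet> b)^2) / 2)) = (\<Prod>b\<in>(Basis :: (real^'k) set). 1 / sqrt (2*pi)) * (\<Prod>b\<in>Basis. exp (- ((z \<bullet> b)^2) / 2))"
      by (rule prod.distrib)
    also have "(\<Prod>b\<in>Basis. exp (- ((z \<bullet> b)^2) / 2)) = exp (\<Sum>b\<in>Basis. - ((z \<bullet> b)^2) / 2)"
      by (simp add: exp_sum)
    also have "(\<Sum>b\<in>Basis. - ((z \<bullet> b)^2) / 2) = - (\<Sum>b\<in>Basis. (z \<bullet> b)^2) / 2"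
      by (simp add: sum_divide_distrib[symmetric] sum_negf)
    finally show ?thesis by simp
  qed
  also have "(1 / sqrt (2*pi)) ^ CARD('k) = (2 * pi) powr (- real CARD('k) / 2)"
    by (simp add: sqrt_def powr_realpow[symmetric] powr_minus_divide powr_powr divide_simps
       root_powr_inverse real_root_pos_pos_le powr_divide)
  finally show ?thesis by (simp add: Defs.std_normal_density_def n)
qed

lemma vecmom_gen:
  fixes a :: "real ^ 'k"
  shows "(\<integral>\<^sup>+z. ennreal (std_normal_density z * (a \<bullet> z)^n) \<partial>lborel)
     = (\<integral>\<^sup>+f. ennreal (WW Basis f * (\<Sum>b\<in>Basis. (a \<bullet> b) * f b)^n) \<partial>Pi\<^sub>M Basis (\<lambda>_. lborel))"
proof -
  have e: "std_normal_density z * (a \<bullet> z)^n = (\<Prod>b\<in>Basis. g1 (z \<bullet> b)) * (\<Sum>b\<in>Basis. (a \<bullet> b) * (z \<bullet> b))^n" for z :: "real^'k"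
    by (subst euclidean_inner) (simp add: phi_prod)
  have "(\<integral>\<^sup>+z. ennreal (std_normal_density z * (a \<bullet> z)^n) \<partial>lborel)
     = (\<integral>\<^sup>+z. ennreal ((\<Prod>b\<in>Basis. g1 (z \<bullet> b)) * (\<Sum>b\<in>Basis. (a \<bullet> b) * (z \<bullet> b))^n) \<partial>lborel)"
    by (simp only: e)
  also have "\<dots> = (\<integral>\<^sup>+f. ennreal ((\<Prod>b\<in>Basis. g1 ((\<Sum>b'\<in>Basis. f b' *\<^sub>R b') \<bullet> b)) *
       (\<Sum>b\<in>Basis. (a \<bullet> b) * ((\<Sum>b'\<in>Basis. f b' *\<^sub>R b') \<bullet> b))^n) \<partial>Pi\<^sub>M Basis (\<lambda>_. lborel))"
    by (rule transport) measurable
  also have "\<dots> = (\<integral>\<^sup>+f. ennreal (WW Basis f * (\<Sum>b\<in>Basis. (a \<bullet> b) * f b)^n) \<partial>Pi\<^sub>M Basis (\<lambda>_. lborel))"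
    unfolding WW_def by (intro nn_integral_cong arg_cong[where f=ennreal] arg_cong2[where f="(*)"]
       arg_cong[where f="\<lambda>t. t^n"] prod.cong sum.cong refl) (simp_all add: inner_transport)
  finally show ?thesis .
qed

lemma normsq: "(\<Sum>b\<in>Basis. (a \<bullet> b)^2) = (norm (a::real^'k))^2"
  by (simp only: power2_norm_eq_inner, subst euclidean_inner[of a a], simp add: power2_eq_square)

lemma vecmom:
  fixes a :: "real ^ 'k"
  shows "(\<integral>\<^sup>+z. ennreal (std_normal_density (z::real^'k)) \<partial>lborel) = 1"
    "(\<integral>\<^sup>+z. ennreal (std_normal_density z * (a \<bullet> z)^2) \<partial>lborel) = ennreal ((norm a)^2)"
    "(\<integral>\<^sup>+z. ennreal (std_normal_density z * (a \<bullet> z)^4) \<partial>lborel) = ennreal (3 * (norm a)^4)"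
proof -
  note P = prodmom[of "Basis :: (real^'k) set" "\<lambda>b. a \<bullet> b", OF finite_Basis, unfolded normsq]
  show "(\<integral>\<^sup>+z. ennreal (std_normal_density (z::real^'k)) \<partial>lborel) = 1"
    using vecmom_gen[of a 0] P by simp
  show "(\<integral>\<^sup>+z. ennreal (std_normal_density z * (a \<bullet> z)^2) \<partial>lborel) = ennreal ((norm a)^2)"
    using vecmom_gen[of a 2] P by simp
  show "(\<integral>\<^sup>+z. ennreal (std_normal_density z * (a \<bullet> z)^4) \<partial>lborel) = ennreal (3 * (norm a)^4)"
    using vecmom_gen[of a 4] P by simp
qed

lemma phi_line: "(\<lambda>t. std_normal_density (z + t *\<^sub>R axis j 1 :: real^'k)) =
   (\<lambda>t. (2 * pi) powr (- real CARD('k) / 2) * exp (- ((z \<bullet> z) + 2 * t * z$j + t^2) / 2))"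
proof
  fix t
  have "(norm (z + t *\<^sub>R axis j 1))^2 = (z \<bullet> z) + 2 * t * z$j + t^2"
    unfolding power2_norm_eq_inner by (simp add: inner_add_left inner_add_right inner_axis inner_axis' inner_commute power2_eq_square algebra_simps)
  then show "std_normal_density (z + t *\<^sub>R axis j 1 :: real^'k) =
   (2 * pi) powr (- real CARD('k) / 2) * exp (- ((z \<bullet> z) + 2 * t * z$j + t^2) / 2)"
    by (simp add: Defs.std_normal_density_def)
qed

lemma phi_deriv: "((\<lambda>t. std_normal_density (z + t *\<^sub>R axis j 1 :: real^'k)) has_real_derivative
    (- z$j * std_normal_density z)) (at 0)"
proof -
  have "((\<lambda>t. (2 * pi) powr (- real CARD('k) / 2) * exp (- ((z \<bullet> z) + 2 * t * z$j + t^2) / 2)) has_real_derivative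
     (2 * pi) powr (- real CARD('k) / 2) * (exp (- ((z \<bullet> z) + 2 * 0 * z$j + 0^2) / 2) * (- (2 * z$j + 2 * 0) / 2))) (at 0)"
    by (intro derivative_eq_intros) auto
  then show ?thesis unfolding phi_line
    by (simp add: Defs.std_normal_density_def power2_norm_eq_inner mult_ac)
qed

lemma pd:
  fixes p :: "real^'k \<Rightarrow> real"
  assumes "\<And>z. ((\<lambda>t. p (z + t *\<^sub>R axis j 1)) has_real_derivative dp z) (at 0)"
  shows "partial_deriv j (\<lambda>z. p z * std_normal_density z) z = (dp z - z$j * p z) * std_normal_density z"
proof -
  note DERIV_mult[OF assms phi_deriv]
  then show ?thesis unfolding partial_deriv_def
    by (intro DERIV_imp_deriv) (simp add: algebra_simps)
qed

lemma d3: "partial_deriv j'' std_normal_density = (\<lambda>z::real^'k. (- z$j'') * std_normal_density z)"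
proof
  fix z :: "real^'k"
  have "partial_deriv j'' (\<lambda>z. 1 * std_normal_density z) z = (0 - z$j'' * 1) * std_normal_density z"
    by (rule pd) simp
  then show "partial_deriv j'' std_normal_density z = (- z$j'') * std_normal_density z" by simp
qed

lemma d2: "partial_deriv j' (\<lambda>z::real^'k. (- z$j'') * std_normal_density z) =
   (\<lambda>z. (z$j' * z$j'' - (if j'' = j' then 1 else 0)) * std_normal_density z)"
proof
  fix z :: "real^'k"
  have "partial_deriv j' (\<lambda>z::real^'k. (- z$j'') * std_normal_density z) z =
     ((- (if j'' = j' then 1 else 0)) - z$j' * (- z$j'')) * std_normal_density z"
  proof (rule pd)
    fix z :: "real^'k"
    show "((\<lambda>t. - (z + t *\<^sub>R axis j' 1) $ j'') has_real_derivative - (if j'' = j' then 1 else 0)) (at 0)"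
      by (simp add: axis_def) (auto intro!: derivative_eq_intros)
  qed
  then show "partial_deriv j' (\<lambda>z::real^'k. (- z$j'') * std_normal_density z) z =
     (z$j' * z$j'' - (if j'' = j' then 1 else 0)) * std_normal_density z" by simp
qed

lemma d1: "partial_deriv j (\<lambda>z::real^'k. (z$j' * z$j'' - (if j'' = j' then 1 else 0)) * std_normal_density z) z =
   ((if j' = j then 1 else 0) * z$j'' + z$j' * (if j'' = j then 1 else 0)
     - z$j * (z$j' * z$j'' - (if j'' = j' then 1 else 0))) * std_normal_density z"
proof (rule pd)
  fix z :: "real^'k"
  show "((\<lambda>t. (z + t *\<^sub>R axis j 1) $ j' * (z + t *\<^sub>R axis j 1) $ j'' - (if j'' = j' then 1 else 0)) has_real_derivative
     (if j' = j then 1 else 0) * z$j'' + z$j' * (if j'' = j then 1 else 0)) (at 0)"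
    by (simp add: axis_def) (auto intro!: derivative_eq_intros)
qed

lemma if01l: "(if P then 1 else 0) * (x::real) = (if P then x else 0)" by simp
lemma if01r: "(x::real) * (if P then y else 0) = (if P then x * y else 0)" by simp
lemma sum_if_const: "(\<Sum>x\<in>S. if P then f x else (0::real)) = (if P then (\<Sum>x\<in>S. f x) else 0)" by simp

lemma vi: "x \<bullet> y = (\<Sum>i\<in>UNIV. x$i * y$i)" for x y :: "real^'k"
  by (simp add: inner_vec_def)

lemma S1: "(\<Sum>j\<in>UNIV. \<Sum>j'\<in>UNIV. \<Sum>j''\<in>UNIV. u$j * v$j' * v$j'' * ((if j' = j then 1 else 0) * z$j''))
   = (u \<bullet> v) * (v \<bullet> (z::real^'k))"
  by (simp add: inner_vec_def sum_product if01l if01r sum_if_const sum.delta mult_ac)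

lemma S2: "(\<Sum>j\<in>UNIV. \<Sum>j'\<in>UNIV. \<Sum>j''\<in>UNIV. u$j * v$j' * v$j'' * (z$j' * (if j'' = j then 1 else 0)))
   = (u \<bullet> v) * (v \<bullet> (z::real^'k))"
  by (simp add: inner_vec_def sum_product if01l if01r sum_if_const sum.delta mult_ac)

lemma S3: "(\<Sum>j\<in>UNIV. \<Sum>j'\<in>UNIV. \<Sum>j''\<in>UNIV. u$j * v$j' * v$j'' * (z$j * (z$j' * z$j'' - (if j'' = j' then 1 else 0))))
   = (u \<bullet> z) * ((v \<bullet> (z::real^'k))^2 - v \<bullet> v)"
proof -
  have "(\<Sum>j\<in>UNIV. \<Sum>j'\<in>UNIV. \<Sum>j''\<in>UNIV. u$j * v$j' * v$j'' * (z$j * (z$j' * z$j'' - (if j'' = j' then 1 else 0))))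
     = (\<Sum>j\<in>UNIV. \<Sum>j'\<in>UNIV. \<Sum>j''\<in>UNIV. u$j * v$j' * v$j'' * (z$j * (z$j' * z$j''))) -
       (\<Sum>j\<in>UNIV. \<Sum>j'\<in>UNIV. \<Sum>j''\<in>UNIV. u$j * v$j' * v$j'' * (z$j * (if j'' = j' then 1 else 0)))"
    by (simp add: right_diff_distrib sum_subtractf)
  also have "(\<Sum>j\<in>UNIV. \<Sum>j'\<in>UNIV. \<Sum>j''\<in>UNIV. u$j * v$j' * v$j'' * (z$j * (z$j' * z$j'')))
     = (u \<bullet> z) * ((v \<bullet> z) * (v \<bullet> z))"
  proof -
    have "(u \<bullet> z) * ((v \<bullet> z) * (v \<bullet> z)) = (\<Sum>j\<in>UNIV. u$j*z$j) * (\<Sum>j'\<in>UNIV. \<Sum>j''\<in>UNIV. (v$j'*z$j') * (v$j''*z$j''))"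
      unfolding vi by (subst sum_product) (rule refl)
    also have "\<dots> = (\<Sum>j\<in>UNIV. \<Sum>j'\<in>UNIV. (u$j*z$j) * (\<Sum>j''\<in>UNIV. (v$j'*z$j') * (v$j''*z$j'')))"
      by (subst sum_product) (rule refl)
    also have "\<dots> = (\<Sum>j\<in>UNIV. \<Sum>j'\<in>UNIV. \<Sum>j''\<in>UNIV. u$j * v$j' * v$j'' * (z$j * (z$j' * z$j'')))"
      by (intro sum.cong refl) (simp add: sum_distrib_left mult_ac)
    finally show ?thesis ..
  qed
  also have "(\<Sum>j\<in>UNIV. \<Sum>j'\<in>UNIV. \<Sum>j''\<in>UNIV. u$j * v$j' * v$j'' * (z$j * (if j'' = j' then 1 else 0)))
     = (u \<bullet> z) * (v \<bullet> v)"
    by (simp only: vi sum_product) (simp add: if01l if01r sum.delta mult_ac)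
  finally show ?thesis by (simp add: power2_eq_square right_diff_distrib)
qed

lemma integrand:
  fixes u v z :: "real^'k"
  shows "(\<Sum>j\<in>UNIV. \<Sum>j'\<in>UNIV. \<Sum>j''\<in>UNIV.
            u $ j * v $ j' * v $ j'' *
            partial_deriv j (partial_deriv j' (partial_deriv j'' std_normal_density)) z)
     = (2 * (u \<bullet> v) * (v \<bullet> z) - (u \<bullet> z) * ((v \<bullet> z)^2 - v \<bullet> v)) * std_normal_density z"
proof -
  have "(\<Sum>j\<in>UNIV. \<Sum>j'\<in>UNIV. \<Sum>j''\<in>UNIV.
            u $ j * v $ j' * v $ j'' *
            partial_deriv j (partial_deriv j' (partial_deriv j'' std_normal_density)) z)
     = (\<Sum>j\<in>UNIV. \<Sum>j'\<in>UNIV. \<Sum>j''\<in>UNIV.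
            u$j * v$j' * v$j'' * ((if j' = j then 1 else 0) * z$j'') +
            u$j * v$j' * v$j'' * (z$j' * (if j'' = j then 1 else 0)) -
            u$j * v$j' * v$j'' * (z$j * (z$j' * z$j'' - (if j'' = j' then 1 else 0)))) * std_normal_density z"
    by (simp only: d3 d2 d1) (simp add: sum_distrib_right sum_distrib_left algebra_simps)
  also have "\<dots> = (2 * (u \<bullet> v) * (v \<bullet> z) - (u \<bullet> z) * ((v \<bullet> z)^2 - v \<bullet> v)) * std_normal_density z"
    by (simp only: sum.distrib sum_subtractf S1 S2 S3) simp
  finally show ?thesis .
qed

lemma ptwise:
  fixes w p q s t :: real
  assumes s: "s > 0" and t: "t > 0" and w: "\<bar>w\<bar> \<le> s * t"
  shows "\<bar>2 * w * q - p * (q^2 - t^2)\<bar> \<le> 3/2 * s * t^2 + t^2 / (2 * s) * p^2 + s / (2 * t^2) * q^4"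
proof -
  let ?W = "q^2 - t^2"
  have "\<bar>2 * w * q - p * ?W\<bar> \<le> 2 * \<bar>w\<bar> * \<bar>q\<bar> + \<bar>p\<bar> * \<bar>?W\<bar>"
    by (simp add: abs_mult abs_triangle_ineq4[THEN order_trans] )
  also have "2 * \<bar>w\<bar> * \<bar>q\<bar> \<le> 2 * (s * t) * \<bar>q\<bar>"
    using w by (intro mult_right_mono) auto
  also have "2 * (s * t) * \<bar>q\<bar> \<le> s * t^2 + s * q^2"
  proof -
    have "0 \<le> s * (t - \<bar>q\<bar>)^2" using s by simp
    then show ?thesis by (simp add: power2_eq_square algebra_simps)
  qed
  also have "\<bar>p\<bar> * \<bar>?W\<bar> \<le> t^2 / (2 * s) * p^2 + s / (2 * t^2) * ?W^2"
  proof -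
    have "0 \<le> (t^2 * \<bar>p\<bar> - s * \<bar>?W\<bar>)^2" by simp
    then have "2 * s * t^2 * (\<bar>p\<bar> * \<bar>?W\<bar>) \<le> t^4 * p^2 + s^2 * ?W^2"
      by (simp add: power2_eq_square power4_eq_xxxx algebra_simps)
    then have "\<bar>p\<bar> * \<bar>?W\<bar> \<le> (t^4 * p^2 + s^2 * ?W^2) / (2 * s * t^2)"
      using s t by (simp add: field_simps)
    also have "\<dots> = t^2 / (2 * s) * p^2 + s / (2 * t^2) * ?W^2"
      using s t by (simp add: field_simps power2_eq_square power4_eq_xxxx)
    finally show ?thesis .
  qed
  also have "s * t^2 + s * q^2 + (t^2 / (2 * s) * p^2 + s / (2 * t^2) * ?W^2) = 3/2 * s * t^2 + t^2 / (2 * s) * p^2 + s / (2 * t^2) * q^4"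
    using s t by (simp add: field_simps power2_eq_square power4_eq_xxxx)
  finally show ?thesis by simp
qed

lemma const_ineq: "7/2 \<le> 2 * (1 + sqrt (2 / pi))"
proof -
  have "pi \<le> 32/9" using pi_approx(2) by simp
  then have "9/16 \<le> 2 / pi" using pi_gt_zero by (simp add: field_simps)
  then have "sqrt (9/16) \<le> sqrt (2/pi)" by (rule real_sqrt_le_mono)
  moreover have "sqrt (9/16 :: real) = 3/4" by (simp add: real_sqrt_divide)
  ultimately show ?thesis by simp
qed

lemma phi_nonneg: "std_normal_density (z::real^'k) \<ge> 0"
  by (simp add: Defs.std_normal_density_def)

lemma phi_meas[measurable]: "(std_normal_density :: real^'k \<Rightarrow> real) \<in> borel_measurable borel"
  unfolding Defs.std_normal_density_def[abs_def] by measurable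

lemma Bint:
  fixes u v :: "real^'k" and A B C :: real
  assumes "A \<ge> 0" "B \<ge> 0" "C \<ge> 0"
  shows "(\<integral>\<^sup>+z. ennreal ((A + B * (u \<bullet> z)^2 + C * (v \<bullet> z)^4) * std_normal_density z) \<partial>lborel)
     = ennreal (A + B * (norm u)^2 + C * (3 * (norm v)^4))"
proof -
  have "(\<integral>\<^sup>+z. ennreal ((A + B * (u \<bullet> z)^2 + C * (v \<bullet> z)^4) * std_normal_density z) \<partial>lborel)
     = (\<integral>\<^sup>+z. ennreal A * ennreal (std_normal_density z) + (ennreal B * ennreal (std_normal_density z * (u \<bullet> z)^2)
        + ennreal C * ennreal (std_normal_density z * (v \<bullet> z)^4)) \<partial>lborel)"
    apply (rule nn_integral_cong)
    apply (subst ennreal_mult[symmetric], simp add: assms, simp add: phi_nonneg)+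
    apply (subst ennreal_plus[symmetric], simp add: assms phi_nonneg, simp add: assms phi_nonneg)+
    apply (simp add: algebra_simps)
    done
  also have "\<dots> = ennreal A * 1 + (ennreal B * ennreal ((norm u)^2) + ennreal C * ennreal (3 * (norm v)^4))"
    by (subst nn_integral_add; (subst nn_integral_add)?) (auto simp: nn_integral_cmult vecmom)
  also have "\<dots> = ennreal (A + B * (norm u)^2 + C * (3 * (norm v)^4))"
    using assms by (simp add: ennreal_mult[symmetric] ennreal_plus[symmetric] del: ennreal_plus)
  finally show ?thesis .
qed

theorem lemma3p4:
  fixes u v :: "real ^ 'k"
  shows "(\<integral>\<^sup>+ z. ennreal \<bar>\<Sum>j\<in>UNIV. \<Sum>j'\<in>UNIV. \<Sum>j''\<in>UNIV.
            u $ j * v $ j' * v $ j'' *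
            partial_deriv j (partial_deriv j' (partial_deriv j'' std_normal_density)) z\<bar> \<partial>lborel)
         \<le> ennreal (2 * (1 + sqrt (2 / pi)) * norm u * (norm v)\<^sup>2)"
proof -
  have vv: "v \<bullet> v = (norm v)^2" by (simp add: power2_norm_eq_inner)
  have E: "\<bar>\<Sum>j\<in>UNIV. \<Sum>j'\<in>UNIV. \<Sum>j''\<in>UNIV.
            u $ j * v $ j' * v $ j'' *
            partial_deriv j (partial_deriv j' (partial_deriv j'' std_normal_density)) z\<bar>
      = \<bar>2 * (u \<bullet> v) * (v \<bullet> z) - (u \<bullet> z) * ((v \<bullet> z)^2 - (norm v)^2)\<bar> * std_normal_density z" for z
    unfolding integrand vv by (simp add: abs_mult phi_nonneg)
  show ?thesis
  proof (cases "u = 0 \<or> v = 0")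
    case True
    then have "(\<integral>\<^sup>+ z. ennreal \<bar>\<Sum>j\<in>UNIV. \<Sum>j'\<in>UNIV. \<Sum>j''\<in>UNIV.
            u $ j * v $ j' * v $ j'' *
            partial_deriv j (partial_deriv j' (partial_deriv j'' std_normal_density)) z\<bar> \<partial>lborel) = 0"
      unfolding E by auto
    then show ?thesis by simp
  next
    case False
    let ?s = "norm u" and ?t = "norm v"
    have s: "?s > 0" and t: "?t > 0" using False by auto
    have "(\<integral>\<^sup>+ z. ennreal \<bar>\<Sum>j\<in>UNIV. \<Sum>j'\<in>UNIV. \<Sum>j''\<in>UNIV.
            u $ j * v $ j' * v $ j'' *
            partial_deriv j (partial_deriv j' (partial_deriv j'' std_normal_density)) z\<bar> \<partial>lborel)
       \<le> (\<integral>\<^sup>+z. ennreal ((3/2 * ?s * ?t^2 + ?t^2 / (2 * ?s) * (u \<bullet> z)^2 + ?s / (2 * ?t^2) * (v \<bullet> z)^4) * std_normal_density z) \<partial>lborel)"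
      unfolding E
    proof (intro nn_integral_mono ennreal_leI mult_right_mono phi_nonneg)
      fix z
      show "\<bar>2 * (u \<bullet> v) * (v \<bullet> z) - (u \<bullet> z) * ((v \<bullet> z)^2 - ?t^2)\<bar>
         \<le> 3/2 * ?s * ?t^2 + ?t^2 / (2 * ?s) * (u \<bullet> z)^2 + ?s / (2 * ?t^2) * (v \<bullet> z)^4"
        by (rule ptwise[OF s t Cauchy_Schwarz_ineq2])
    qed
    also have "\<dots> = ennreal (3/2 * ?s * ?t^2 + ?t^2 / (2 * ?s) * ?s^2 + ?s / (2 * ?t^2) * (3 * ?t^4))"
      using s t by (intro Bint) auto
    also have "3/2 * ?s * ?t^2 + ?t^2 / (2 * ?s) * ?s^2 + ?s / (2 * ?t^2) * (3 * ?t^4) = 7/2 * ?s * ?t^2"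
      using s t by (simp add: field_simps power2_eq_square power4_eq_xxxx)
    also have "ennreal (7/2 * ?s * ?t^2) \<le> ennreal (2 * (1 + sqrt (2 / pi)) * ?s * ?t^2)"
      using const_ineq s t by (intro ennreal_leI mult_right_mono) auto
    finally show ?thesis .
  qed
qed

end
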